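(* For $k,d\in\mathbb{Z}_{\ge0}$ let $M^o_{k,d}$ (resp. $M^e_{k,d}$) be the set of triples $(m,\mathbf{k},\mathbf{l})$ with $m\in\mathbb{Z}_{\ge0}$, $\mathbf{k}=(k_1,\dots,k_n)$, $\mathbf{l}=(l_1,\dots,l_n)$, $0\le n\le k$, $m+k_1+\dots+k_n=k$, $k_u\ge2$, $l_u\ge0$, $k_u-1-l_u\ge1$, such that $s:=\sum_u(k_u-1-l_u)$ satisfies $s\le d$ and $s$ odd (resp. even; $n=0$ gives $s=0$). Then $|M^o_{0,d}|=|M^o_{1,d}|=0$, $|M^e_{0,d}|=|M^e_{1,d}|=1$, and for $k\ge2$, $d\ge1$, \[|M^o_{k,d}|=|M^o_{k-1,d}|+|M^e_{k-1,d-1}|,\qquad |M^e_{k,d}|=|M^e_{k-1,d}|+|M^o_{k-1,d-1}|.\] In particular $|M^o_{0,0}|=|M^o_{1,1}|=0$, $|M^e_{0,0}|=|M^e_{1,1}|=1$, and $|M^o_{k,k}|=|M^e_{k,k}|=2^{k-2}$ for $k\ge2$.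
   Context: In the paper each triple $(m,\mathbf{k},\mathbf{l})$ represents the number $\sigma^m\mathrm{Ls}_{\mathbf{k}}^{\mathbf{l}}(\sigma)$, where $\mathrm{Ls}_{\mathbf{k}}^{\mathbf{l}}(\sigma)=(-1)^n\int_0^{\sigma}\int_0^{\theta_n}\cdots\int_0^{\theta_2}\prod_u\theta_u^{l_u}(\log|2\sin(\theta_u/2)|)^{k_u-1-l_u}\,d\theta_1\cdots d\theta_n$ for a fixed real $\sigma$. *)

theory Defs
  imports Main
begin

definition sval :: "nat list \<Rightarrow> nat list \<Rightarrow> int" where
  "sval ks ls = (\<Sum>u<length ks. int (ks ! u) - 1 - int (ls ! u))"

definition Mset :: "bool \<Rightarrow> nat \<Rightarrow> nat \<Rightarrow> (nat \<times> nat list \<times> nat list) set" where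
  "Mset p k d = {(m, ks, ls). length ls = length ks \<and> length ks \<le> k \<and>
      m + sum_list ks = k \<and>
      (\<forall>u<length ks. ks ! u \<ge> 2 \<and> int (ks ! u) - 1 - int (ls ! u) \<ge> 1) \<and>
      sval ks ls \<le> int d \<and> odd (sval ks ls) = p}"

abbreviation Mo :: "nat \<Rightarrow> nat \<Rightarrow> (nat \<times> nat list \<times> nat list) set" where
  "Mo k d \<equiv> Mset True k d"

abbreviation Me :: "nat \<Rightarrow> nat \<Rightarrow> (nat \<times> nat list \<times> nat list) set" where
  "Me k d \<equiv> Mset False k d"

end

theory Submission
  imports Defs
begin

definition good :: "nat list \<Rightarrow> nat list \<Rightarrow> bool" where
  "good ks ls = (length ls = length ks \<and>
     (\<forall>u<length ks. ks ! u \<ge> 2 \<and> int (ks ! u) - 1 - int (ls ! u) \<ge> 1))"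

lemma good_Nil[simp]: "good [] ls \<longleftrightarrow> ls = []"
  by (auto simp: good_def)

lemma good_snoc[simp]:
  "good (ks @ [a]) (ls @ [b]) \<longleftrightarrow> good ks ls \<and> b + 2 \<le> a"
proof
  assume g: "good (ks @ [a]) (ls @ [b])"
  then have l: "length ls = length ks" by (simp add: good_def)
  have "\<forall>u<length ks. ks ! u \<ge> 2 \<and> int (ks ! u) - 1 - int (ls ! u) \<ge> 1"
  proof (intro allI impI)
    fix u assume "u < length ks"
    with g l show "ks ! u \<ge> 2 \<and> int (ks ! u) - 1 - int (ls ! u) \<ge> 1"
      unfolding good_def by (auto dest!: spec[of _ u] simp: nth_append)
  qed
  moreover have "a \<ge> 2 \<and> int a - 1 - int b \<ge> 1"
    using g l unfolding good_def by (auto dest!: spec[of _ "length ks"] simp: nth_append)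
  ultimately show "good ks ls \<and> b + 2 \<le> a" using l by (auto simp: good_def)
next
  assume g: "good ks ls \<and> b + 2 \<le> a"
  then have l: "length ls = length ks" by (simp add: good_def)
  show "good (ks @ [a]) (ls @ [b])" unfolding good_def
  proof (intro conjI allI impI)
    show "length (ls @ [b]) = length (ks @ [a])" using l by simp
  next
    fix u assume "u < length (ks @ [a])"
    then have "u < length ks \<or> u = length ks" by auto
    then have "(ks @ [a]) ! u \<ge> 2 \<and> int ((ks @ [a]) ! u) - 1 - int ((ls @ [b]) ! u) \<ge> 1"
      using g l by (auto simp: good_def nth_append)
    then show "(ks @ [a]) ! u \<ge> 2" "int ((ks @ [a]) ! u) - 1 - int ((ls @ [b]) ! u) \<ge> 1" by auto
  qed
qed

lemma good_len: "good ks ls \<Longrightarrow> length ls = length ks"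
  by (simp add: good_def)

lemma sval_snoc:
  assumes "length ls = length ks"
  shows "sval (ks @ [a]) (ls @ [b]) = sval ks ls + int a - 1 - int b"
  using assms by (simp add: sval_def nth_append)

lemma sval_Nil[simp]: "sval [] ls = 0"
  by (simp add: sval_def)

lemma good_sum: "good ks ls \<Longrightarrow> 2 * length ks \<le> sum_list ks"
proof -
  assume g: "good ks ls"
  have "(\<Sum>i<length ks. (2::nat)) \<le> (\<Sum>i<length ks. ks ! i)"
    by (rule sum_mono) (use g in \<open>auto simp: good_def\<close>)
  then show ?thesis by (simp add: sum_list_sum_nth atLeast0LessThan)
qed

lemma sval_le: "sval ks ls \<le> int (sum_list ks)"
proof -
  have "sval ks ls \<le> (\<Sum>i<length ks. int (ks ! i))"
    unfolding sval_def by (rule sum_mono) auto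
  also have "\<dots> = int (sum_list ks)"
    by (simp add: sum_list_sum_nth atLeast0LessThan)
  finally show ?thesis .
qed

lemma Mset_alt: "Mset p k d = {(m, ks, ls). good ks ls \<and> m + sum_list ks = k \<and>
      sval ks ls \<le> int d \<and> odd (sval ks ls) = p}"
proof -
  have "good ks ls \<Longrightarrow> m + sum_list ks = k \<Longrightarrow> length ks \<le> k" for ks ls :: "nat list" and m
    using good_sum[of ks ls] by linarith
  then show ?thesis unfolding Mset_def good_def by auto
qed

lemma mem_Mset: "(m, ks, ls) \<in> Mset p k d \<longleftrightarrow> good ks ls \<and> m + sum_list ks = k \<and>
      sval ks ls \<le> int d \<and> odd (sval ks ls) = p"
  by (simp add: Mset_alt)

lemma finite_Mset: "finite (Mset p k d)"
proof -
  have "Mset p k d \<subseteq> {..k} \<times> {xs. set xs \<subseteq> {..k} \<and> length xs \<le> k} \<times> {xs. set xs \<subseteq> {..k} \<and> length xs \<le> k}"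
  proof (rule subsetI)
    fix y assume "y \<in> Mset p k d"
    then obtain m ks ls where y: "y = (m, ks, ls)" and A: "(m, ks, ls) \<in> Mset p k d"
      by (cases y) auto
    then have g: "good ks ls" and s: "m + sum_list ks = k" by (auto simp: mem_Mset)
    have 1: "m \<le> k" using s by auto
    have 2: "length ks \<le> k" using good_sum[OF g] s by linarith
    then have 3: "length ls \<le> k" using good_len[OF g] by simp
    have 4: "x \<le> k" if "x \<in> set ks" for x
      using member_le_sum_list[OF that] s by auto
    have 5: "x \<le> k" if "x \<in> set ls" for x
    proof -
      from that obtain i where i: "i < length ls" "x = ls ! i" by (auto simp: in_set_conv_nth)
      with g have "ls ! i \<le> ks ! i" "i < length ks" by (auto simp: good_def)
      moreover have "ks ! i \<le> k" using 4 \<open>i < length ks\<close> by auto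
      ultimately show ?thesis using i by auto
    qed
    show "y \<in> {..k} \<times> {xs. set xs \<subseteq> {..k} \<and> length xs \<le> k} \<times> {xs. set xs \<subseteq> {..k} \<and> length xs \<le> k}"
      using y 1 2 3 4 5 by auto
  qed
  moreover have "finite ({..k} \<times> {xs. set xs \<subseteq> {..k} \<and> length xs \<le> k} \<times> {xs. set xs \<subseteq> {..k} \<and> length xs \<le> k})"
    by (intro finite_cartesian_product finite_lists_length_le) auto
  ultimately show ?thesis by (rule finite_subset)
qed

definition fmap :: "nat \<times> nat list \<times> nat list \<Rightarrow> nat \<times> nat list \<times> nat list" where
  "fmap x = (case x of (m, ks, ls) \<Rightarrow>
     if last ks = last ls + 2 then (last ks - 1, butlast ks, butlast ls)
     else (0, butlast ks @ [last ks - 1], ls))"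

definition gmap :: "nat \<times> nat list \<times> nat list \<Rightarrow> nat \<times> nat list \<times> nat list" where
  "gmap x = (case x of (m, ks, ls) \<Rightarrow>
     if m = 0 then (0, butlast ks @ [Suc (last ks)], ls)
     else (0, ks @ [m + 1], ls @ [m - 1]))"

lemma snoc_split:
  assumes "good ks ls" "ks \<noteq> []"
  obtains ks0 ls0 a b where "ks = ks0 @ [a]" "ls = ls0 @ [b]" "length ls0 = length ks0"
proof -
  from assms(2) obtain ks0 a where k: "ks = ks0 @ [a]" by (cases ks rule: rev_cases) auto
  with good_len[OF assms(1)] obtain ls0 b where l: "ls = ls0 @ [b]" by (cases ls rule: rev_cases) auto
  from k l good_len[OF assms(1)] show ?thesis by (intro that[OF k l]) simp
qed

lemma odd_minus1: "odd ((x::int) - 1) \<longleftrightarrow> \<not> odd x"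
  by presburger

lemma fmap_snoc: "fmap (m, ks0 @ [a], ls0 @ [b]) =
   (if a = b + 2 then (a - 1, ks0, ls0) else (0, ks0 @ [a - 1], ls0 @ [b]))"
  by (simp add: fmap_def)

lemma gmap0: "gmap (0, ks0 @ [a], ls) = (0, ks0 @ [Suc a], ls)"
  by (simp add: gmap_def)

lemma gmapS: "m \<noteq> 0 \<Longrightarrow> gmap (m, ks, ls) = (0, ks @ [m + 1], ls @ [m - 1])"
  by (simp add: gmap_def)

lemma bij_part:
  assumes K: "K \<ge> 1"
  shows "bij_betw fmap {x \<in> Mset p (Suc K) (Suc D). fst x = 0} (Mset (\<not> p) K D)"
proof (rule bij_betw_byWitness[where f' = gmap])
  show "\<forall>a\<in>{x \<in> Mset p (Suc K) (Suc D). fst x = 0}. gmap (fmap a) = a"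
  proof (intro ballI)
    fix y assume "y \<in> {x \<in> Mset p (Suc K) (Suc D). fst x = 0}"
    then obtain ks ls where y: "y = (0, ks, ls)" and A: "(0, ks, ls) \<in> Mset p (Suc K) (Suc D)"
      by (cases y) auto
    then have g: "good ks ls" and s: "sum_list ks = Suc K" by (auto simp: mem_Mset)
    have "ks \<noteq> []" using s by auto
    then obtain ks0 ls0 a b where e: "ks = ks0 @ [a]" "ls = ls0 @ [b]" "length ls0 = length ks0"
      by (rule snoc_split[OF g])
    have ab: "b + 2 \<le> a" using g e by simp
    show "gmap (fmap y) = y"
    proof (cases "a = b + 2")
      case True
      then show ?thesis using y e by (simp add: fmap_snoc gmapS)
    next
      case False
      then show ?thesis using y e ab by (simp add: fmap_snoc gmap0)
    qed
  qed
  show "\<forall>a'\<in>Mset (\<not> p) K D. fmap (gmap a') = a'"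
  proof (intro ballI)
    fix y assume "y \<in> Mset (\<not> p) K D"
    then obtain m ks ls where y: "y = (m, ks, ls)" and A: "(m, ks, ls) \<in> Mset (\<not> p) K D"
      by (cases y) auto
    then have g: "good ks ls" and s: "m + sum_list ks = K" by (auto simp: mem_Mset)
    show "fmap (gmap y) = y"
    proof (cases "m = 0")
      case True
      then have "ks \<noteq> []" using s K by auto
      then obtain ks0 ls0 a b where e: "ks = ks0 @ [a]" "ls = ls0 @ [b]" "length ls0 = length ks0"
        by (rule snoc_split[OF g])
      have ab: "b + 2 \<le> a" using g e by simp
      show ?thesis using y e True ab by (simp add: fmap_snoc gmap0)
    next
      case False
      then show ?thesis using y by (simp add: fmap_snoc gmapS)
    qed
  qed
  show "fmap ` {x \<in> Mset p (Suc K) (Suc D). fst x = 0} \<subseteq> Mset (\<not> p) K D"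
  proof (rule image_subsetI)
    fix y assume "y \<in> {x \<in> Mset p (Suc K) (Suc D). fst x = 0}"
    then obtain ks ls where y: "y = (0, ks, ls)" and A: "(0, ks, ls) \<in> Mset p (Suc K) (Suc D)"
      by (cases y) auto
    then have g: "good ks ls" and s: "sum_list ks = Suc K"
      and sv: "sval ks ls \<le> int (Suc D)" "odd (sval ks ls) = p" by (auto simp: mem_Mset)
    have "ks \<noteq> []" using s by auto
    then obtain ks0 ls0 a b where e: "ks = ks0 @ [a]" "ls = ls0 @ [b]" "length ls0 = length ks0"
      by (rule snoc_split[OF g])
    have ab: "b + 2 \<le> a" "good ks0 ls0" using g e by auto
    have svs: "sval ks ls = sval ks0 ls0 + int a - 1 - int b" using e sval_snoc by simp
    have s0: "sum_list ks0 + a = Suc K" using s e by simp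
    show "fmap y \<in> Mset (\<not> p) K D"
    proof (cases "a = b + 2")
      case True
      have "sval ks0 ls0 = sval ks ls - 1" using svs True by simp
      then have "sval ks0 ls0 \<le> int D" "odd (sval ks0 ls0) = (\<not> p)"
        using sv odd_minus1 by auto
      moreover have "a - 1 + sum_list ks0 = K" using s0 True by simp
      ultimately show ?thesis using y e True ab by (simp add: fmap_snoc mem_Mset)
    next
      case False
      have "sval (ks0 @ [a - 1]) (ls0 @ [b]) = sval ks0 ls0 + int (a - 1) - 1 - int b"
        using e sval_snoc by simp
      also have "\<dots> = sval ks ls - 1" using svs ab by simp
      finally have sv2: "sval (ks0 @ [a - 1]) (ls0 @ [b]) = sval ks ls - 1" .
      have "sval (ks0 @ [a - 1]) (ls0 @ [b]) \<le> int D"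
        "odd (sval (ks0 @ [a - 1]) (ls0 @ [b])) = (\<not> p)"
        using sv sv2 odd_minus1 by auto
      moreover have "sum_list ks0 + (a - 1) = K" using s0 ab by simp
      moreover have "b + 2 \<le> a - 1" using ab False by simp
      ultimately show ?thesis using y e False ab by (simp add: fmap_snoc mem_Mset)
    qed
  qed
  show "gmap ` Mset (\<not> p) K D \<subseteq> {x \<in> Mset p (Suc K) (Suc D). fst x = 0}"
  proof (rule image_subsetI)
    fix y assume "y \<in> Mset (\<not> p) K D"
    then obtain m ks ls where y: "y = (m, ks, ls)" and A: "(m, ks, ls) \<in> Mset (\<not> p) K D"
      by (cases y) auto
    then have g: "good ks ls" and s: "m + sum_list ks = K"
      and sv: "sval ks ls \<le> int D" "odd (sval ks ls) = (\<not> p)" by (auto simp: mem_Mset)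
    show "gmap y \<in> {x \<in> Mset p (Suc K) (Suc D). fst x = 0}"
    proof (cases "m = 0")
      case True
      then have "ks \<noteq> []" using s K by auto
      then obtain ks0 ls0 a b where e: "ks = ks0 @ [a]" "ls = ls0 @ [b]" "length ls0 = length ks0"
        by (rule snoc_split[OF g])
      have ab: "b + 2 \<le> a" "good ks0 ls0" using g e by auto
      have "sval ks ls = sval ks0 ls0 + int a - 1 - int b" using e sval_snoc by simp
      moreover have "sval (ks0 @ [Suc a]) (ls0 @ [b]) = sval ks0 ls0 + int (Suc a) - 1 - int b"
        using e sval_snoc by simp
      ultimately have sv2: "sval ks ls = sval (ks0 @ [Suc a]) (ls0 @ [b]) - 1" by simp
      have "sval (ks0 @ [Suc a]) (ls0 @ [b]) \<le> int (Suc D)"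
        "odd (sval (ks0 @ [Suc a]) (ls0 @ [b])) = p"
        using sv sv2 odd_minus1[of "sval (ks0 @ [Suc a]) (ls0 @ [b])"] by auto
      moreover have "sum_list ks0 + Suc a = Suc K" using s e True by simp
      ultimately show ?thesis using y e True ab by (simp add: gmap0 mem_Mset)
    next
      case False
      have "sval (ks @ [m + 1]) (ls @ [m - 1]) = sval ks ls + int (m + 1) - 1 - int (m - 1)"
        using g good_len sval_snoc by blast
      also have "\<dots> = sval ks ls + 1" using False by simp
      finally have sv2: "sval (ks @ [m + 1]) (ls @ [m - 1]) = sval ks ls + 1" .
      have "sval (ks @ [m + 1]) (ls @ [m - 1]) \<le> int (Suc D)"
        "odd (sval (ks @ [m + 1]) (ls @ [m - 1])) = p"
        using sv sv2 odd_minus1[of "sval ks ls + 1"] by auto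
      moreover have "sum_list ks + (m + 1) = Suc K" using s by simp
      moreover have "m - 1 + 2 \<le> m + 1" using False by simp
      ultimately show ?thesis using y g False by (simp add: gmapS mem_Mset)
    qed
  qed
qed

lemma shift_part:
  "{x \<in> Mset p (Suc K) d. fst x \<noteq> 0} = (\<lambda>(m, r). (Suc m, r)) ` Mset p K d"
proof (rule set_eqI)
  fix y :: "nat \<times> nat list \<times> nat list"
  obtain m ks ls where y: "y = (m, ks, ls)" by (cases y) auto
  show "y \<in> {x \<in> Mset p (Suc K) d. fst x \<noteq> 0} \<longleftrightarrow> y \<in> (\<lambda>(m, r). (Suc m, r)) ` Mset p K d"
  proof
    assume "y \<in> {x \<in> Mset p (Suc K) d. fst x \<noteq> 0}"
    then have "(m - 1, ks, ls) \<in> Mset p K d" "y = (Suc (m - 1), ks, ls)" using y by (auto simp: mem_Mset)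
    then show "y \<in> (\<lambda>(m, r). (Suc m, r)) ` Mset p K d" by force
  next
    assume "y \<in> (\<lambda>(m, r). (Suc m, r)) ` Mset p K d"
    then obtain z where z: "z \<in> Mset p K d" "y = (\<lambda>(m, r). (Suc m, r)) z" by blast
    obtain m' ks' ls' where zz: "z = (m', ks', ls')" by (cases z) auto
    show "y \<in> {x \<in> Mset p (Suc K) d. fst x \<noteq> 0}" using z zz by (auto simp: mem_Mset)
  qed
qed

lemma recur:
  assumes "K \<ge> 1"
  shows "card (Mset p (Suc K) (Suc D)) = card (Mset p K (Suc D)) + card (Mset (\<not> p) K D)"
proof -
  have split: "Mset p (Suc K) (Suc D) = {x \<in> Mset p (Suc K) (Suc D). fst x \<noteq> 0} \<union>
     {x \<in> Mset p (Suc K) (Suc D). fst x = 0}" by auto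
  have "card (Mset p (Suc K) (Suc D)) = card {x \<in> Mset p (Suc K) (Suc D). fst x \<noteq> 0} +
     card {x \<in> Mset p (Suc K) (Suc D). fst x = 0}"
    by (subst split, rule card_Un_disjoint) (auto intro: finite_subset[OF _ finite_Mset])
  also have "card {x \<in> Mset p (Suc K) (Suc D). fst x \<noteq> 0} = card (Mset p K (Suc D))"
    unfolding shift_part by (rule card_image) (auto simp: inj_on_def)
  also have "card {x \<in> Mset p (Suc K) (Suc D). fst x = 0} = card (Mset (\<not> p) K D)"
    by (rule bij_betw_same_card[OF bij_part[OF assms]])
  finally show ?thesis .
qed

lemma small: "k \<le> 1 \<Longrightarrow> Mset p k d = (if p then {} else {(k, [], [])})"
proof -
  assume k: "k \<le> 1"
  have "ks = [] \<and> ls = []" if "good ks ls" "sum_list ks \<le> 1" for ks ls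
  proof -
    have "length ks = 0" using good_sum[OF that(1)] that(2) by linarith
    then show ?thesis using good_len[OF that(1)] by simp
  qed
  then have H: "(m, ks, ls) \<in> Mset p k d \<longleftrightarrow> (\<not> p \<and> m = k \<and> ks = [] \<and> ls = [])" for m ks ls
  proof -
    assume E: "\<And>ks ls. good ks ls \<Longrightarrow> sum_list ks \<le> 1 \<Longrightarrow> ks = [] \<and> ls = []"
    show ?thesis
    proof
      assume "(m, ks, ls) \<in> Mset p k d"
      then have g: "good ks ls" "m + sum_list ks = k" "odd (sval ks ls) = p" by (auto simp: mem_Mset)
      then have "ks = [] \<and> ls = []" using E k by force
      then show "\<not> p \<and> m = k \<and> ks = [] \<and> ls = []" using g by simp
    qed (auto simp: mem_Mset)
  qed
  show ?thesis
  proof (rule set_eqI)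
    fix y :: "nat \<times> nat list \<times> nat list"
    obtain m ks ls where y: "y = (m, ks, ls)" by (cases y) auto
    show "y \<in> Mset p k d \<longleftrightarrow> y \<in> (if p then {} else {(k, [], [])})"
      unfolding y H by auto
  qed
qed

lemma stable: "d \<ge> k \<Longrightarrow> Mset p k d = Mset p k k"
proof -
  assume "d \<ge> k"
  have "m + sum_list ks = k \<Longrightarrow> sval ks ls \<le> int k" for m ks ls
    using sval_le[of ks ls] by linarith
  then show ?thesis using \<open>d \<ge> k\<close> unfolding Mset_alt by force
qed

lemma diag: "k \<ge> 2 \<Longrightarrow> card (Mo k k) = 2 ^ (k - 2) \<and> card (Me k k) = 2 ^ (k - 2)"
proof (induction k rule: dec_induct)
  case base
  have "card (Mset p 2 2) = card (Mset p 1 2) + card (Mset (\<not> p) 1 1)" for p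
    using recur[of 1 p 1] by (simp add: numeral_2_eq_2)
  then show ?case by (simp add: small)
next
  case (step n)
  have "card (Mset p (Suc n) (Suc n)) = card (Mset p n (Suc n)) + card (Mset (\<not> p) n n)" for p
    using recur[of n p n] step by simp
  moreover have "Mset p n (Suc n) = Mset p n n" for p by (rule stable) simp
  moreover have "(2::nat) ^ (n - 2) + 2 ^ (n - 2) = 2 ^ (Suc n - 2)"
  proof -
    obtain j where "n = j + 2" using step(1) by (metis add.commute le_Suc_ex)
    then show ?thesis by simp
  qed
  ultimately show ?case using step by simp
qed

theorem theorem9:
  shows "(\<forall>d. card (Mo 0 d) = 0 \<and> card (Mo 1 d) = 0 \<and> card (Me 0 d) = 1 \<and> card (Me 1 d) = 1)
    \<and> (\<forall>k d. k \<ge> 2 \<longrightarrow> d \<ge> 1 \<longrightarrow>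
          card (Mo k d) = card (Mo (k - 1) d) + card (Me (k - 1) (d - 1)) \<and>
          card (Me k d) = card (Me (k - 1) d) + card (Mo (k - 1) (d - 1)))
    \<and> card (Mo 0 0) = 0 \<and> card (Mo 1 1) = 0 \<and> card (Me 0 0) = 1 \<and> card (Me 1 1) = 1
    \<and> (\<forall>k. k \<ge> 2 \<longrightarrow> card (Mo k k) = 2 ^ (k - 2) \<and> card (Me k k) = 2 ^ (k - 2))"
proof (intro conjI allI impI)
  fix k d :: nat assume k: "k \<ge> 2" and d: "d \<ge> 1"
  obtain K D where KD: "k = Suc K" "d = Suc D" "K \<ge> 1" using k d
    by (metis Suc_le_D Suc_le_mono numeral_2_eq_2 One_nat_def)
  show "card (Mo k d) = card (Mo (k - 1) d) + card (Me (k - 1) (d - 1))"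
    using recur[of K True D] KD by simp
  show "card (Me k d) = card (Me (k - 1) d) + card (Mo (k - 1) (d - 1))"
    using recur[of K False D] KD by simp
next
  fix k :: nat assume "k \<ge> 2" then show "card (Mo k k) = 2 ^ (k - 2)" using diag by blast
next
  fix k :: nat assume "k \<ge> 2" then show "card (Me k k) = 2 ^ (k - 2)" using diag by blast
qed (simp_all add: small)

end
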